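(* Let $n \ge 3$ be odd, let $f \in S_{1,1}(n)$ and let $g \in S_{0,0}(n)$. Then: (i) $\psi(f) \in S_{0,0}(n)$ if $\sigma_f = 1$, and $\psi(f) \in S_{0,1}(n)$ if $\sigma_f = 0$; (ii) $\psi^{-1}(f) \in S_{0,0}(n)$ if $\sigma_f = 0$, and $\psi^{-1}(f) \in S_{1,0}(n)$ if $\sigma_f = 1$; (iii) $\psi(g) \in S_{1,1}(n)$ if $\sigma_g = 1$, and $\psi(g) \in S_{1,0}(n)$ if $\sigma_g = 0$; (iv) $\psi^{-1}(g) \in S_{1,1}(n)$ if $\sigma_g = 0$, and $\psi^{-1}(g) \in S_{0,1}(n)$ if $\sigma_g = 1$.
   Context: For $n \ge 2$, let $\mathcal{I}_n$ be the set of all irreducible polynomials of degree $n$ in $\mathbb{F}_2[x]$. Every $f \in \mathcal{I}_n$ is monic with constant term $1$; write $f = x^n + f_{n-1}x^{n-1} + \cdots + f_1 x + 1$ with $f_k \in \mathbb{F}_2$. For $i,j \in \mathbb{F}_2$, $S_{i,j}(n)$ denotes the set of $f \in \mathcal{I}_n$ with $f_{n-1} = i$ and $f_1 = j$. Define $\psi : \mathcal{I}_n \to \mathcal{I}_n$ by $\psi(f)(x) = (x+1)^n f\!\left(\frac{1}{x+1}\right)$, with inverse $\psi^{-1}(f)(x) = x^n f\!\left(\frac{x+1}{x}\right)$. The signature of $f \in \mathcal{I}_n$ is $\sigma_f = \sum_{k=2}^{n-2} k f_k \pmod 2 \in \mathbb{F}_2$. *)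

theory Defs
  imports "HOL-Computational_Algebra.Polynomial" "HOL-Computational_Algebra.Polynomial_Factorial" "HOL-Library.Z2"
begin

definition Irr :: "nat \<Rightarrow> bit poly set" where
  "Irr n = {f. degree f = n \<and> lead_coeff f = 1 \<and> irreducible f}"

definition S :: "bit \<Rightarrow> bit \<Rightarrow> nat \<Rightarrow> bit poly set" where
  "S i j n = {f \<in> Irr n. coeff f (n - 1) = i \<and> coeff f 1 = j}"

text \<open>psi(f)(x) = (x+1)^n f(1/(x+1)) = sum_k f_k (x+1)^(n-k)\<close>
definition psi :: "nat \<Rightarrow> bit poly \<Rightarrow> bit poly" where
  "psi n f = (\<Sum>k\<le>n. smult (coeff f k) ([:1, 1:] ^ (n - k)))"

text \<open>psi^{-1}(f)(x) = x^n f((x+1)/x) = sum_k f_k (x+1)^k x^(n-k)\<close>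
definition psi_inv :: "nat \<Rightarrow> bit poly \<Rightarrow> bit poly" where
  "psi_inv n f = (\<Sum>k\<le>n. smult (coeff f k) ([:1, 1:] ^ k * [:0, 1:] ^ (n - k)))"

definition sigma :: "nat \<Rightarrow> bit poly \<Rightarrow> bit" where
  "sigma n f = (\<Sum>k=2..n-2. of_nat k * coeff f k)"

end

theory Submission imports Defs begin

lemma of_nat_bit: "(of_nat m :: bit) = (if even m then 0 else 1)"
  by (induction m) auto

lemma coeff_q_pow: "coeff ([:1,1::bit:]^m) j = of_nat (m choose j)"
proof (cases "j \<le> m")
  case True then show ?thesis by (simp add: coeff_linear_poly_power)
next
  case False
  have "degree ([:1,1::bit:]^m) = m" by (simp add: degree_power_eq)
  with False show ?thesis by (simp add: coeff_eq_0 binomial_eq_0)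
qed

lemma coeff_psi: "coeff (psi n f) j = (\<Sum>k\<le>n. coeff f k * of_nat ((n-k) choose j))"
  by (simp add: psi_def coeff_sum coeff_q_pow)

lemma coeff_mult_xpow: "coeff (p * [:0,1:]^m) j = (if m \<le> j then coeff p (j-m) else (0::bit))"
proof -
  have "p * [:0,1:]^m = monom 1 m * p" by (simp add: monom_altdef mult.commute)
  then have "coeff (p * [:0,1:]^m) j = coeff (monom 1 m * p) j" by (rule arg_cong)
  also have "\<dots> = (if j < m then 0 else 1 * coeff p (j - m))" by (rule coeff_monom_mult)
  finally show ?thesis by auto
qed

lemma coeff_psi_inv: "coeff (psi_inv n f) j =
   (\<Sum>k\<le>n. coeff f k * (if n - k \<le> j then of_nat (k choose (j - (n-k))) else 0))"
  unfolding psi_inv_def coeff_sum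
  by (intro sum.cong refl) (simp only: coeff_smult coeff_mult_xpow coeff_q_pow)

definition Lh :: "nat \<Rightarrow> bit poly \<Rightarrow> bit poly" where
  "Lh n p = (\<Sum>k\<le>n. monom (coeff p k) (n-k))"

lemma coeff_Lh: "coeff (Lh n p) i = (if i \<le> n then coeff p (n-i) else 0)"
proof -
  have "coeff (Lh n p) i = (\<Sum>k\<le>n. if k = n - i \<and> i \<le> n then coeff p k else 0)"
    unfolding Lh_def coeff_sum coeff_monom
    by (rule sum.cong) auto
  also have "\<dots> = (if i \<le> n then coeff p (n-i) else 0)"
    by (cases "i \<le> n") auto
  finally show ?thesis .
qed

lemma Lh_reflect: assumes "degree p \<le> n"
  shows "Lh n p = monom 1 (n - degree p) * reflect_poly p"
proof (rule poly_eqI)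
  fix i
  show "coeff (Lh n p) i = coeff (monom 1 (n - degree p) * reflect_poly p) i"
    using assms by (auto simp: coeff_Lh coeff_monom_mult coeff_reflect_poly coeff_eq_0)
qed

lemma Lh_sum: "Lh n (\<Sum>k\<le>m. smult (c k) (P k)) = (\<Sum>k\<le>m. smult (c k) (Lh n (P k)))"
  by (rule poly_eqI) (simp add: coeff_Lh coeff_sum sum_distrib_left)

lemma pcompose_xpow: "pcompose ([:0,1:]^m) q = q^m"
proof (induction m)
  case (Suc m)
  have "pcompose ([:0,1:]^Suc m) q = pcompose [:0,1:] q * pcompose ([:0,1:]^m) q"
    by (simp only: power_Suc pcompose_mult)
  then show ?case using Suc by (simp add: pcompose_pCons)
qed (simp add: pcompose_1)

lemma pcompose_monom: "pcompose (monom c m) q = smult c (q^m)"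
  by (simp add: monom_altdef pcompose_smult pcompose_xpow)

lemma reflect_q: "reflect_poly [:1,1::bit:] = [:1,1:]"
  by (simp add: reflect_poly_pCons' monom_altdef)

lemma psi_eq: assumes "degree f = n"
  shows "psi n f = pcompose (reflect_poly f) [:1,1:]"
proof -
  have "reflect_poly f = Lh n f" using Lh_reflect[of f n] assms by simp
  then show ?thesis
    by (simp add: Lh_def pcompose_sum pcompose_monom psi_def)
qed

lemma psi_inv_eq: assumes "degree f = n"
  shows "psi_inv n f = reflect_poly (pcompose f [:1,1:])"
proof -
  let ?q = "[:1,1::bit:]"
  have dq: "degree (pcompose f ?q) = n" using assms by (simp add: degree_pcompose)
  have "pcompose f ?q = pcompose (\<Sum>k\<le>n. monom (coeff f k) k) ?q"
    using poly_as_sum_of_monoms[of f] assms by simp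
  also have "\<dots> = (\<Sum>k\<le>n. smult (coeff f k) (?q^k))"
    by (simp add: pcompose_sum pcompose_monom)
  finally have e: "pcompose f ?q = (\<Sum>k\<le>n. smult (coeff f k) (?q^k))" .
  have "reflect_poly (pcompose f ?q) = Lh n (pcompose f ?q)"
    using Lh_reflect[of "pcompose f ?q" n] dq by simp
  also have "\<dots> = (\<Sum>k\<le>n. smult (coeff f k) (Lh n (?q^k)))"
    by (simp add: e Lh_sum)
  also have "\<dots> = psi_inv n f"
    unfolding psi_inv_def
  proof (rule sum.cong)
    fix k assume "k \<in> {..n}"
    then have "Lh n (?q^k) = monom 1 (n-k) * ?q^k"
      using Lh_reflect[of "?q^k" n] by (simp add: degree_power_eq reflect_poly_power reflect_q)
    then show "smult (coeff f k) (Lh n (?q^k)) = smult (coeff f k) (?q^k * [:0,1:]^(n-k))"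
      by (simp add: monom_altdef mult.commute)
  qed simp
  finally show ?thesis ..
qed

lemma irr_pcomp: fixes p :: "bit poly" assumes irr: "irreducible p"
  shows "irreducible (pcompose p [:1,1:])"
proof -
  let ?q = "[:1,1::bit:]"
  have qq: "pcompose ?q ?q = [:0,1:]" by (simp add: pcompose_pCons)
  have inv: "pcompose (pcompose r ?q) ?q = r" for r
    by (simp add: pcompose_assoc[symmetric] qq)
  have unit: "is_unit (pcompose a ?q)" if "is_unit a" for a
  proof -
    from that obtain c where "1 = a * c" by (auto elim: dvdE)
    then have "1 = pcompose a ?q * pcompose c ?q"
      by (metis pcompose_1 pcompose_mult)
    then show ?thesis by (rule dvdI)
  qed
  show ?thesis
  proof (rule irreducibleI)
    show "pcompose p ?q \<noteq> 0"
    proof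
      assume "pcompose p ?q = 0"
      then have "p = 0" using inv[of p] by simp
      with irr show False by simp
    qed
    show "\<not> is_unit (pcompose p ?q)"
      using irr inv[of p] unit[of "pcompose p ?q"] irreducible_not_unit by metis
    fix a b assume "pcompose p ?q = a * b"
    then have "p = pcompose a ?q * pcompose b ?q"
      by (metis inv pcompose_mult)
    then have "is_unit (pcompose a ?q) \<or> is_unit (pcompose b ?q)"
      using irr irreducibleD by blast
    then show "is_unit a \<or> is_unit b" using unit inv by metis
  qed
qed

lemma irr_reflect: fixes p :: "bit poly" assumes irr: "irreducible p" and c0: "coeff p 0 \<noteq> 0"
  shows "irreducible (reflect_poly p)"
proof -
  have unit: "is_unit a" if "is_unit (reflect_poly a)" "coeff a 0 \<noteq> 0" for a :: "bit poly"
  proof -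
    have "reflect_poly a \<noteq> 0" using that by auto
    then have "degree (reflect_poly a) = 0" using that is_unit_iff_degree by blast
    then have "degree a = 0" using that by simp
    moreover have "a \<noteq> 0" using that by auto
    ultimately show ?thesis using is_unit_iff_degree by blast
  qed
  have pnz: "p \<noteq> 0" using irr by auto
  show ?thesis
  proof (rule irreducibleI)
    show "reflect_poly p \<noteq> 0" using pnz by simp
    show "\<not> is_unit (reflect_poly p)"
      using unit[of p] c0 irr irreducible_not_unit by blast
    fix a b assume ab: "reflect_poly p = a * b"
    have "coeff a 0 * coeff b 0 = lead_coeff p"
      using arg_cong[OF ab, of "\<lambda>x. coeff x 0"] by (simp add: coeff_mult_0)
    moreover have "lead_coeff p \<noteq> 0" using pnz by simp
    ultimately have "coeff a 0 * coeff b 0 \<noteq> 0" by metis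
    then have a0: "coeff a 0 \<noteq> 0" and b0: "coeff b 0 \<noteq> 0" by (metis mult_zero_left mult_zero_right)+
    have "p = reflect_poly a * reflect_poly b"
      using arg_cong[OF ab, of reflect_poly] c0 by (simp add: reflect_poly_mult)
    then have "is_unit (reflect_poly a) \<or> is_unit (reflect_poly b)"
      using irr irreducibleD by blast
    then show "is_unit a \<or> is_unit b" using unit a0 b0 by blast
  qed
qed

lemma irr_root: fixes p :: "bit poly" assumes irr: "irreducible p" and d: "degree p \<ge> 2"
  shows "poly p c \<noteq> 0"
proof
  assume "poly p c = 0"
  then obtain h where h: "p = [:-c,1:] * h" by (auto simp: poly_eq_0_iff_dvd elim: dvdE)
  then have "is_unit [:-c,1:] \<or> is_unit h" using irr irreducibleD by blast
  moreover have "\<not> is_unit [:-c,1::bit:]" by (simp add: is_unit_iff_degree)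
  moreover have "h \<noteq> 0" using h irr by auto
  ultimately have "degree h = 0" using is_unit_iff_degree by blast
  then have "degree p = 1" using h \<open>h \<noteq> 0\<close>
    by (subst h, subst degree_mult_eq) auto
  with d show False by simp
qed

declare mult_bit_eq_and[simp del] add_bit_eq_xor[simp del]

lemma bit_add_self: "(x::bit) + x = 0"
  by (cases x) simp_all

locale setup_h =
  fixes n :: nat and h :: "bit poly"
  assumes n3: "n \<ge> 3" and nodd: "odd n" and hI: "h \<in> Irr n"
begin

lemma dh: "degree h = n" and irrh: "irreducible h"
  using hI by (auto simp: Irr_def)

lemma h0: "coeff h 0 = 1"
proof -
  have "poly h 0 \<noteq> 0" using irr_root[OF irrh] dh n3 by simp
  then show ?thesis by (simp add: poly_0_coeff_0)
qed

lemma hn: "coeff h n = 1"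
proof -
  have "h \<noteq> 0" using irrh by auto
  then have "lead_coeff h \<noteq> 0" by simp
  then show ?thesis using dh by simp
qed

lemma h1: "poly h 1 = 1"
  using irr_root[OF irrh, of 1] dh n3 by simp

lemma hsum: "(\<Sum>k\<le>n. coeff h k) = 1"
  using h1 by (simp add: poly_altdef dh)

lemma nodd1: "(of_nat n :: bit) = 1"
  using nodd by (simp add: of_nat_bit)

lemma Osum: "(\<Sum>k\<le>n. of_nat k * coeff h k) = coeff h 1 + sigma n h + 1"
proof -
  let ?g = "\<lambda>k. (of_nat k :: bit) * coeff h k"
  have split: "{..n} = ({0,1} \<union> {2..n-2}) \<union> {n-1,n}" using n3 by auto
  have "(\<Sum>k\<le>n. ?g k) = sum ?g ({0,1} \<union> {2..n-2}) + sum ?g {n-1,n}"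
    unfolding split by (rule sum.union_disjoint) (use n3 in auto)
  also have "sum ?g ({0,1} \<union> {2..n-2}) = sum ?g {0,1} + sum ?g {2..n-2}"
    by (rule sum.union_disjoint) auto
  also have "sum ?g {0,1} = coeff h 1" by simp
  also have "sum ?g {2..n-2} = sigma n h" by (simp add: sigma_def)
  also have "sum ?g {n-1,n} = of_nat (n-1) * coeff h (n-1) + of_nat n * coeff h n"
    using n3 by simp
  also have "\<dots> = 1" using nodd n3 hn by (simp add: of_nat_bit)
  finally show ?thesis .
qed

lemma psi_n: "coeff (psi n h) n = 1"
proof -
  have "coeff (psi n h) n = (\<Sum>k\<le>n. if k = 0 then 1 else 0)"
    unfolding coeff_psi by (rule sum.cong) (auto simp: h0 binomial_eq_0)
  then show ?thesis by simp
qed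

lemma psi_big: "j > n \<Longrightarrow> coeff (psi n h) j = 0"
  unfolding coeff_psi by (rule sum.neutral) (auto simp: binomial_eq_0)

lemma psi_n1: "coeff (psi n h) (n-1) = 1 + coeff h 1"
proof -
  have "coeff (psi n h) (n-1) = (\<Sum>k\<le>n. (if k = 0 then 1 else 0) + (if k = 1 then coeff h 1 else 0))"
    unfolding coeff_psi
  proof (rule sum.cong)
    fix k assume k: "k \<in> {..n}"
    show "coeff h k * of_nat ((n - k) choose (n - 1)) = (if k = 0 then 1 else 0) + (if k = 1 then coeff h 1 else 0)"
    proof (cases "k = 0")
      case True
      have "n - (n-1) = 1" using n3 by simp
      then have "n choose (n-1) = n" using binomial_symmetric[of "n-1" n] by simp
      then show ?thesis using True h0 nodd1 by simp
    next
      case False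
      then show ?thesis using n3 by (cases "k = 1") (auto simp: binomial_eq_0)
    qed
  qed simp
  also have "\<dots> = 1 + coeff h 1" using n3 by (simp add: sum.distrib)
  finally show ?thesis .
qed

lemma psi_1: "coeff (psi n h) 1 = coeff h 1 + sigma n h"
proof -
  have "coeff (psi n h) 1 = (\<Sum>k\<le>n. coeff h k + of_nat k * coeff h k)"
    unfolding coeff_psi
  proof (rule sum.cong)
    fix k assume k: "k \<in> {..n}"
    have "even (n - k) \<longleftrightarrow> odd k" using k nodd by (auto simp: even_diff_nat)
    then show "coeff h k * of_nat ((n - k) choose 1) = coeff h k + of_nat k * coeff h k"
      by (cases "coeff h k") (auto simp: of_nat_bit)
  qed simp
  also have "\<dots> = 1 + (coeff h 1 + sigma n h + 1)"
    by (simp add: sum.distrib hsum Osum)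
  also have "\<dots> = coeff h 1 + sigma n h"
    by (cases "coeff h 1"; cases "sigma n h") simp_all
  finally show ?thesis .
qed

lemma psiI_n: "coeff (psi_inv n h) n = 1"
proof -
  have "coeff (psi_inv n h) n = (\<Sum>k\<le>n. coeff h k)"
    unfolding coeff_psi_inv by (rule sum.cong) auto
  then show ?thesis using hsum by simp
qed

lemma psiI_big: "j > n \<Longrightarrow> coeff (psi_inv n h) j = 0"
  unfolding coeff_psi_inv by (rule sum.neutral) (auto simp: binomial_eq_0)

lemma psiI_n1: "coeff (psi_inv n h) (n-1) = coeff h 1 + sigma n h + 1"
proof -
  have "coeff (psi_inv n h) (n-1) = (\<Sum>k\<le>n. of_nat k * coeff h k)"
    unfolding coeff_psi_inv
  proof (rule sum.cong)
    fix k assume k: "k \<in> {..n}"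
    show "coeff h k * (if n - k \<le> n - 1 then of_nat (k choose (n - 1 - (n - k))) else 0) = of_nat k * coeff h k"
    proof (cases "k = 0")
      case False
      then have "n - 1 - (n - k) = k - 1" "n - k \<le> n - 1" using k n3 by auto
      moreover have "k - (k-1) = 1" using False by simp
      then have "k choose (k-1) = k" using binomial_symmetric[of "k-1" k] by simp
      ultimately show ?thesis by (simp add: mult.commute)
    qed (use n3 in simp)
  qed simp
  then show ?thesis using Osum by simp
qed

lemma psiI_1: "coeff (psi_inv n h) 1 = coeff h (n-1) + 1"
proof -
  have "coeff (psi_inv n h) 1 = (\<Sum>k\<le>n. (if k = n-1 then coeff h (n-1) else 0) + (if k = n then 1 else 0))"
    unfolding coeff_psi_inv
  proof (rule sum.cong)
    fix k assume k: "k \<in> {..n}"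
    show "coeff h k * (if n - k \<le> 1 then of_nat (k choose (1 - (n - k))) else 0) =
      (if k = n-1 then coeff h (n-1) else 0) + (if k = n then 1 else 0)"
    proof (cases "k = n")
      case True then show ?thesis using hn nodd1 n3 by simp
    next
      case False
      then show ?thesis using n3 k by (cases "k = n - 1") auto
    qed
  qed simp
  also have "\<dots> = coeff h (n-1) + 1" using n3 by (simp add: sum.distrib)
  finally show ?thesis .
qed

lemma psi_Irr: "psi n h \<in> Irr n"
proof -
  have d: "degree (psi n h) = n"
    using psi_n psi_big by (metis antisym degree_le le_degree one_neq_zero)
  have "irreducible (psi n h)"
    using psi_eq[OF dh] irr_pcomp irr_reflect irrh h0 by simp
  then show ?thesis using d psi_n by (simp add: Irr_def)
qed

lemma psiI_Irr: "psi_inv n h \<in> Irr n"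
proof -
  have d: "degree (psi_inv n h) = n"
    using psiI_n psiI_big by (metis antisym degree_le le_degree one_neq_zero)
  have "coeff (pcompose h [:1,1:]) 0 \<noteq> 0" using h1 by simp
  then have "irreducible (psi_inv n h)"
    using psi_inv_eq[OF dh] irr_pcomp irr_reflect irrh by simp
  then show ?thesis using d psiI_n by (simp add: Irr_def)
qed

end


theorem lemma1:
  fixes n :: nat and f g :: "bit poly"
  assumes "n \<ge> 3" and "odd n" and "f \<in> S 1 1 n" and "g \<in> S 0 0 n"
  shows "(sigma n f = 1 \<longrightarrow> psi n f \<in> S 0 0 n) \<and> (sigma n f = 0 \<longrightarrow> psi n f \<in> S 0 1 n)
       \<and> (sigma n f = 0 \<longrightarrow> psi_inv n f \<in> S 0 0 n) \<and> (sigma n f = 1 \<longrightarrow> psi_inv n f \<in> S 1 0 n)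
       \<and> (sigma n g = 1 \<longrightarrow> psi n g \<in> S 1 1 n) \<and> (sigma n g = 0 \<longrightarrow> psi n g \<in> S 1 0 n)
       \<and> (sigma n g = 0 \<longrightarrow> psi_inv n g \<in> S 1 1 n) \<and> (sigma n g = 1 \<longrightarrow> psi_inv n g \<in> S 0 1 n)"
proof -
  have fI: "f \<in> Irr n" and f1: "coeff f (n-1) = 1" "coeff f 1 = 1" using assms(3) by (auto simp: S_def)
  have gI: "g \<in> Irr n" and g1: "coeff g (n-1) = 0" "coeff g 1 = 0" using assms(4) by (auto simp: S_def)
  interpret F: setup_h n f using assms fI by unfold_locales
  interpret G: setup_h n g using assms gI by unfold_locales
  have one: "(1::bit) + 1 = 0" by (rule bit_add_self)
  show ?thesis
    unfolding S_def
    using F.psi_Irr F.psiI_Irr G.psi_Irr G.psiI_Irr F.psi_n1 F.psi_1 F.psiI_n1 F.psiI_1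
      G.psi_n1 G.psi_1 G.psiI_n1 G.psiI_1 f1 g1 one
    by (cases "sigma n f"; cases "sigma n g") simp_all
qed

end
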